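(* Let $\mathcal E\colon L^2(\mu)\to[0,\infty]$ be a proper lower semicontinuous convex functional (symmetric, $\mathcal E(0)=0$) such that $\mathcal E_e$ exists. (a) If $\mathcal E$ is a nonlinear order preserving form, then $D(\mathcal E_e)\cap L^2(\mu)=D(\mathcal E)$ and $M(\mathcal E_e)\cap L^2(\mu)=M(\mathcal E)$. (b) If $\mathcal E$ is a nonlinear order preserving form, then $\mathcal E_e$ satisfies the first Beurling–Deny criterion and $\||f|\|_{L_e}\le\|f\|_{L_e}$ for all $f\in M(\mathcal E_e)$. (c) If $\mathcal E$ is a nonlinear Dirichlet form, then $\mathcal E_e$ satisfies the second Beurling–Deny criterion and $\|Cf\|_{L_e}\le\|f\|_{L_e}$ for all $f\in M(\mathcal E_e)$ and all normal contractions $C\colon\mathbb R\to\mathbb R$.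
   Context: $(X,\mathfrak A,\mu)$ is $\sigma$-finite; $L^0(\mu)$ carries local convergence in measure. A normal contraction is a 1-Lipschitz $C\colon\mathbb R\to\mathbb R$ with $C(0)=0$; it operates on a functional $F$ on $L^p(\mu)$ ($p\in\{0,2\}$) if $F(f+Cg)+F(f-Cg)\le F(f+g)+F(f-g)$ for all $f,g\in L^p(\mu)$. First Beurling–Deny criterion: $x\mapsto|x|$ operates; second: all normal contractions operate. Nonlinear order preserving form: lower semicontinuous convex $\mathcal E$ satisfying the first criterion; nonlinear Dirichlet form: additionally the second. $M(\cdot)$ and Luxemburg seminorms: $M(F)=\{f:\lim_{\lambda\to0+}F(\lambda f)=0\}$, $\|f\|=\inf\{\lambda>0:F(\lambda^{-1}f)\le1\}$; $\|\cdot\|_{L_e}$ is the one of $\mathcal E_e$. $\mathcal E_e$ exists if $\mathcal E$ (extended by $+\infty$ to $L^0$) is lower semicontinuous on $D(\mathcal E)$ w.r.t. local convergence in measure; $\mathcal E_e$ is then its lower semicontinuous relaxation on $L^0(\mu)$. *)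

theory Defs
  imports "HOL-Analysis.Analysis"
begin

text \<open>Elements of L^0 and L^2 are represented by measurable real functions;
  functionals on L^2 are required to be invariant under a.e. equality.\<close>

definition L0 :: "'a measure \<Rightarrow> ('a \<Rightarrow> real) set" where
  "L0 M = borel_measurable M"

definition L2 :: "'a measure \<Rightarrow> ('a \<Rightarrow> real) set" where
  "L2 M = {f \<in> borel_measurable M. integrable M (\<lambda>x. (f x)^2)}"

definition loc_meas_conv :: "'a measure \<Rightarrow> (nat \<Rightarrow> 'a \<Rightarrow> real) \<Rightarrow> ('a \<Rightarrow> real) \<Rightarrow> bool" where
  "loc_meas_conv M fs f \<longleftrightarrow>
     (\<forall>A\<in>sets M. emeasure M A < \<infinity> \<longrightarrow>
       (\<forall>\<epsilon>>0. ((\<lambda>n. emeasure M (A \<inter> {x\<in>space M. \<epsilon> < \<bar>fs n x - f x\<bar>})) \<longlongrightarrow> 0) sequentially))"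

definition L2_conv :: "'a measure \<Rightarrow> (nat \<Rightarrow> 'a \<Rightarrow> real) \<Rightarrow> ('a \<Rightarrow> real) \<Rightarrow> bool" where
  "L2_conv M fs f \<longleftrightarrow> ((\<lambda>n. integral\<^sup>L M (\<lambda>x. (fs n x - f x)^2)) \<longlongrightarrow> 0) sequentially"

definition dom_fun :: "('a \<Rightarrow> real) set \<Rightarrow> (('a \<Rightarrow> real) \<Rightarrow> ennreal) \<Rightarrow> ('a \<Rightarrow> real) set" where
  "dom_fun S F = {f \<in> S. F f < \<infinity>}"

definition M_set :: "('a \<Rightarrow> real) set \<Rightarrow> (('a \<Rightarrow> real) \<Rightarrow> ennreal) \<Rightarrow> ('a \<Rightarrow> real) set" where
  "M_set S F = {f \<in> S. ((\<lambda>t. F (\<lambda>x. t * f x)) \<longlongrightarrow> 0) (at_right 0)}"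

definition lux :: "(('a \<Rightarrow> real) \<Rightarrow> ennreal) \<Rightarrow> ('a \<Rightarrow> real) \<Rightarrow> real" where
  "lux F f = Inf {r::real. 0 < r \<and> F (\<lambda>x. f x / r) \<le> 1}"

definition normal_contraction :: "(real \<Rightarrow> real) \<Rightarrow> bool" where
  "normal_contraction C \<longleftrightarrow> C 0 = 0 \<and> (\<forall>x y. \<bar>C x - C y\<bar> \<le> \<bar>x - y\<bar>)"

definition operates :: "('a \<Rightarrow> real) set \<Rightarrow> (real \<Rightarrow> real) \<Rightarrow> (('a \<Rightarrow> real) \<Rightarrow> ennreal) \<Rightarrow> bool" where
  "operates S C F \<longleftrightarrow> (\<forall>f\<in>S. \<forall>g\<in>S.
     F (\<lambda>x. f x + C (g x)) + F (\<lambda>x. f x - C (g x)) \<le> F (\<lambda>x. f x + g x) + F (\<lambda>x. f x - g x))"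

definition first_BD :: "('a \<Rightarrow> real) set \<Rightarrow> (('a \<Rightarrow> real) \<Rightarrow> ennreal) \<Rightarrow> bool" where
  "first_BD S F \<longleftrightarrow> operates S abs F"

definition second_BD :: "('a \<Rightarrow> real) set \<Rightarrow> (('a \<Rightarrow> real) \<Rightarrow> ennreal) \<Rightarrow> bool" where
  "second_BD S F \<longleftrightarrow> (\<forall>C. normal_contraction C \<longrightarrow> operates S C F)"

definition L2_functional :: "'a measure \<Rightarrow> (('a \<Rightarrow> real) \<Rightarrow> ennreal) \<Rightarrow> bool" where
  "L2_functional M E \<longleftrightarrow>
     (\<forall>f\<in>L2 M. \<forall>g\<in>L2 M. (AE x in M. f x = g x) \<longrightarrow> E f = E g) \<and>
     E (\<lambda>x. 0) = 0 \<and>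
     (\<exists>f\<in>L2 M. E f < \<infinity>) \<and>
     (\<forall>f\<in>L2 M. E (\<lambda>x. - f x) = E f) \<and>
     (\<forall>f\<in>L2 M. \<forall>g\<in>L2 M. \<forall>t::real. 0 \<le> t \<and> t \<le> 1 \<longrightarrow>
        E (\<lambda>x. t * f x + (1 - t) * g x) \<le> ennreal t * E f + ennreal (1 - t) * E g) \<and>
     (\<forall>fs f. (\<forall>n. fs n \<in> L2 M) \<and> f \<in> L2 M \<and> L2_conv M fs f \<longrightarrow>
        E f \<le> liminf (\<lambda>n. E (fs n)))"

definition ext_inf :: "'a measure \<Rightarrow> (('a \<Rightarrow> real) \<Rightarrow> ennreal) \<Rightarrow> ('a \<Rightarrow> real) \<Rightarrow> ennreal" where
  "ext_inf M E f = (if f \<in> L2 M then E f else \<infinity>)"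

definition Ee_exists :: "'a measure \<Rightarrow> (('a \<Rightarrow> real) \<Rightarrow> ennreal) \<Rightarrow> bool" where
  "Ee_exists M E \<longleftrightarrow>
     (\<forall>fs f. (\<forall>n. fs n \<in> dom_fun (L2 M) E) \<and> f \<in> dom_fun (L2 M) E \<and> loc_meas_conv M fs f \<longrightarrow>
        E f \<le> liminf (\<lambda>n. E (fs n)))"

text \<open>The lsc relaxation on L^0 w.r.t. local convergence in measure (this topology
  is (pseudo)metrizable for sigma-finite measures, so sequences suffice).\<close>
definition Ee :: "'a measure \<Rightarrow> (('a \<Rightarrow> real) \<Rightarrow> ennreal) \<Rightarrow> ('a \<Rightarrow> real) \<Rightarrow> ennreal" where
  "Ee M E f = (if f \<in> L0 M then
      Inf {liminf (\<lambda>n. ext_inf M E (fs n)) | fs. (\<forall>n. fs n \<in> L0 M) \<and> loc_meas_conv M fs f}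
    else \<infinity>)"

definition order_preserving_form :: "'a measure \<Rightarrow> (('a \<Rightarrow> real) \<Rightarrow> ennreal) \<Rightarrow> bool" where
  "order_preserving_form M E \<longleftrightarrow> L2_functional M E \<and> first_BD (L2 M) E"

definition dirichlet_form :: "'a measure \<Rightarrow> (('a \<Rightarrow> real) \<Rightarrow> ennreal) \<Rightarrow> bool" where
  "dirichlet_form M E \<longleftrightarrow> order_preserving_form M E \<and> second_BD (L2 M) E"

end

theory Submission
  imports Defs
begin


lemma L2_bound:
  assumes h: "h \<in> borel_measurable M" and a: "a \<in> L2 M" and b: "b \<in> L2 M"
    and le: "\<And>x. x \<in> space M \<Longrightarrow> \<bar>h x\<bar> \<le> \<bar>a x\<bar> + \<bar>b x\<bar>"
  shows "h \<in> L2 M"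
proof -
  have ia: "integrable M (\<lambda>x. (a x)^2)" and ib: "integrable M (\<lambda>x. (b x)^2)"
    and ma: "a \<in> borel_measurable M" and mb: "b \<in> borel_measurable M"
    using a b by (auto simp: L2_def)
  have i2: "integrable M (\<lambda>x. 2 * (a x)^2 + 2 * (b x)^2)"
    using ia ib by auto
  have mh2: "(\<lambda>x. (h x)^2) \<in> borel_measurable M" using h by measurable
  have ae: "AE x in M. norm ((h x)^2) \<le> norm (2 * (a x)^2 + 2 * (b x)^2)"
  proof (rule AE_I2)
    fix x assume x: "x \<in> space M"
    have "\<bar>h x\<bar>^2 \<le> (\<bar>a x\<bar> + \<bar>b x\<bar>)^2"
      using le[OF x] by (intro power_mono) auto
    also have "\<dots> \<le> 2 * (a x)^2 + 2 * (b x)^2"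
    proof -
      have "0 \<le> (\<bar>a x\<bar> - \<bar>b x\<bar>)^2" by simp
      then show ?thesis by (simp add: power2_eq_square algebra_simps)
    qed
    finally show "norm ((h x)^2) \<le> norm (2 * (a x)^2 + 2 * (b x)^2)" by simp
  qed
  have "integrable M (\<lambda>x. (h x)^2)"
    by (rule Bochner_Integration.integrable_bound[OF i2 mh2 ae])
  then show ?thesis using h by (simp add: L2_def)
qed

lemma loc_meas_conv_bound:
  assumes mfs: "\<And>n. fs n \<in> borel_measurable M" and mf: "f \<in> borel_measurable M"
    and mgs: "\<And>n. gs n \<in> borel_measurable M" and mg: "g \<in> borel_measurable M"
    and mhs: "\<And>n. hs n \<in> borel_measurable M" and mh: "h \<in> borel_measurable M"
    and cf: "loc_meas_conv M fs f" and cg: "loc_meas_conv M gs g"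
    and le: "\<And>n x. x \<in> space M \<Longrightarrow> \<bar>hs n x - h x\<bar> \<le> \<bar>fs n x - f x\<bar> + \<bar>gs n x - g x\<bar>"
  shows "loc_meas_conv M hs h"
  unfolding loc_meas_conv_def
proof (intro ballI impI allI)
  fix A and e :: real assume A: "A \<in> sets M" "emeasure M A < \<infinity>" and e: "0 < e"
  define S1 where "S1 n = A \<inter> {x\<in>space M. e/2 < \<bar>fs n x - f x\<bar>}" for n
  define S2 where "S2 n = A \<inter> {x\<in>space M. e/2 < \<bar>gs n x - g x\<bar>}" for n
  have e2: "0 < e/2" using e by simp
  have t1: "(\<lambda>n. emeasure M (S1 n)) \<longlonglongrightarrow> 0"
    using cf A e2 unfolding loc_meas_conv_def S1_def by blast
  have t2: "(\<lambda>n. emeasure M (S2 n)) \<longlonglongrightarrow> 0"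
    using cg A e2 unfolding loc_meas_conv_def S2_def by blast
  have s1: "S1 n \<in> sets M" for n unfolding S1_def using A mfs mf by measurable
  have s2: "S2 n \<in> sets M" for n unfolding S2_def using A mgs mg by measurable
  have sub: "A \<inter> {x\<in>space M. e < \<bar>hs n x - h x\<bar>} \<subseteq> S1 n \<union> S2 n" for n
  proof
    fix x assume x: "x \<in> A \<inter> {x\<in>space M. e < \<bar>hs n x - h x\<bar>}"
    then have "e < \<bar>fs n x - f x\<bar> + \<bar>gs n x - g x\<bar>" using le[of x n] by auto
    then have "e/2 < \<bar>fs n x - f x\<bar> \<or> e/2 < \<bar>gs n x - g x\<bar>" by linarith
    then show "x \<in> S1 n \<union> S2 n" using x unfolding S1_def S2_def by auto
  qed
  have ub: "emeasure M (A \<inter> {x\<in>space M. e < \<bar>hs n x - h x\<bar>}) \<le> emeasure M (S1 n) + emeasure M (S2 n)" for n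
  proof -
    have "emeasure M (A \<inter> {x\<in>space M. e < \<bar>hs n x - h x\<bar>}) \<le> emeasure M (S1 n \<union> S2 n)"
      by (rule emeasure_mono[OF sub]) (use s1 s2 in auto)
    also have "\<dots> \<le> emeasure M (S1 n) + emeasure M (S2 n)"
      by (rule emeasure_subadditive[OF s1 s2])
    finally show ?thesis .
  qed
  have "(\<lambda>n. emeasure M (S1 n) + emeasure M (S2 n)) \<longlonglongrightarrow> 0 + 0"
    by (intro tendsto_add t1 t2)
  then have t: "(\<lambda>n. emeasure M (S1 n) + emeasure M (S2 n)) \<longlonglongrightarrow> 0" by simp
  show "(\<lambda>n. emeasure M (A \<inter> {x\<in>space M. e < \<bar>hs n x - h x\<bar>})) \<longlonglongrightarrow> 0"
  proof (rule tendsto_sandwich[OF _ _ tendsto_const t])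
    show "\<forall>\<^sub>F n in sequentially. 0 \<le> emeasure M (A \<inter> {x\<in>space M. e < \<bar>hs n x - h x\<bar>})" by simp
    show "\<forall>\<^sub>F n in sequentially. emeasure M (A \<inter> {x\<in>space M. e < \<bar>hs n x - h x\<bar>}) \<le> emeasure M (S1 n) + emeasure M (S2 n)"
      by (intro always_eventually allI ub)
  qed
qed



lemma L2_L0: "f \<in> L2 M \<Longrightarrow> f \<in> L0 M" by (simp add: L2_def L0_def)

lemma L2_neg: "f \<in> L2 M \<Longrightarrow> (\<lambda>x. - f x) \<in> L2 M" by (simp add: L2_def)

lemma L2_neg_iff: "(\<lambda>x. - f x) \<in> L2 M \<longleftrightarrow> f \<in> L2 M"
  using L2_neg[of f M] L2_neg[of "\<lambda>x. - f x" M] by auto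

lemma Ee_le_liminf:
  assumes "h \<in> L0 M" "\<And>n. fs n \<in> L0 M" "loc_meas_conv M fs h"
  shows "Ee M E h \<le> liminf (\<lambda>n. ext_inf M E (fs n))"
  unfolding Ee_def using assms by (auto intro!: Inf_lower)

lemma loc_meas_conv_const: "loc_meas_conv M (\<lambda>n. f) f"
  unfolding loc_meas_conv_def by simp

lemma Ee_le_E: "h \<in> L2 M \<Longrightarrow> Ee M E h \<le> E h"
  using Ee_le_liminf[of h M "\<lambda>n. h" E] loc_meas_conv_const[of M h]
  by (auto simp: L2_L0 ext_inf_def Liminf_const)

lemma loc_meas_conv_subseq:
  assumes "strict_mono r" "loc_meas_conv M fs f"
  shows "loc_meas_conv M (fs \<circ> r) f"
  using assms unfolding loc_meas_conv_def
  by (auto intro: LIMSEQ_subseq_LIMSEQ[unfolded comp_def, of _ _ r])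

lemma Ee_conv_rep:
  assumes "\<And>n. fs n \<in> L0 M" "loc_meas_conv M fs h"
  shows "\<exists>gs. (\<forall>n. gs n \<in> L0 M) \<and> loc_meas_conv M gs h \<and>
     (\<lambda>n. ext_inf M E (gs n)) \<longlonglongrightarrow> liminf (\<lambda>n. ext_inf M E (fs n))"
proof -
  obtain r where r: "strict_mono r" "((\<lambda>n. ext_inf M E (fs n)) \<circ> r) \<longlonglongrightarrow> liminf (\<lambda>n. ext_inf M E (fs n))"
    using liminf_subseq_lim by blast
  show ?thesis
    by (rule exI[of _ "fs \<circ> r"]) (use r assms loc_meas_conv_subseq[OF r(1) assms(2)] in \<open>auto simp: comp_def\<close>)
qed

lemma Ee_ge:
  assumes "h \<in> L0 M"
    and "\<And>fs. (\<forall>n. fs n \<in> L0 M) \<Longrightarrow> loc_meas_conv M fs h \<Longrightarrow> c \<le> liminf (\<lambda>n. ext_inf M E (fs n))"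
  shows "c \<le> Ee M E h"
  unfolding Ee_def using assms by (auto intro!: Inf_greatest)

lemma ext_inf_neg:
  assumes "L2_functional M E"
  shows "ext_inf M E (\<lambda>x. - f x) = ext_inf M E f"
proof (cases "f \<in> L2 M")
  case True
  then have "E (\<lambda>x. - f x) = E f" using assms unfolding L2_functional_def by blast
  then show ?thesis using True L2_neg[OF True] by (simp add: ext_inf_def)
next
  case False
  then show ?thesis using L2_neg_iff[of f M] by (simp add: ext_inf_def)
qed

lemma L0_neg: "(\<lambda>x. - f x) \<in> L0 M \<longleftrightarrow> f \<in> L0 M"
proof -
  have "f \<in> L0 M \<Longrightarrow> (\<lambda>x. - f x) \<in> L0 M" for f by (simp add: L0_def)
  from this[of f] this[of "\<lambda>x. - f x"] show ?thesis by auto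
qed

lemma Ee_neg_le:
  assumes "L2_functional M E"
  shows "Ee M E (\<lambda>x. - h x) \<le> Ee M E h"
proof (cases "h \<in> L0 M")
  case True
  show ?thesis
  proof (rule Ee_ge[OF True])
    fix fs assume fs: "\<forall>n. fs n \<in> L0 M" "loc_meas_conv M fs h"
    have "loc_meas_conv M (\<lambda>n x. - fs n x) (\<lambda>x. - h x)"
      using fs(2) unfolding loc_meas_conv_def by (simp add: abs_minus_commute)
    then have "Ee M E (\<lambda>x. - h x) \<le> liminf (\<lambda>n. ext_inf M E (\<lambda>x. - fs n x))"
      using fs True by (intro Ee_le_liminf) (auto simp: L0_neg)
    then show "Ee M E (\<lambda>x. - h x) \<le> liminf (\<lambda>n. ext_inf M E (fs n))"
      using ext_inf_neg[OF assms] by simp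
  qed
next
  case False then show ?thesis by (simp add: Ee_def L0_neg)
qed

lemma Ee_neg:
  assumes "L2_functional M E"
  shows "Ee M E (\<lambda>x. - h x) = Ee M E h"
  using Ee_neg_le[OF assms, of h] Ee_neg_le[OF assms, of "\<lambda>x. - h x"] by simp



lemma nc_measurable:
  assumes "normal_contraction C"
  shows "C \<in> borel_measurable borel"
proof -
  have "1-lipschitz_on UNIV C"
    using assms unfolding normal_contraction_def lipschitz_on_def dist_real_def by auto
  then show ?thesis by (intro borel_measurable_continuous_onI lipschitz_on_continuous_on)
qed

lemma nc_comp_meas:
  assumes "normal_contraction C" "g \<in> borel_measurable M"
  shows "(\<lambda>x. C (g x)) \<in> borel_measurable M"
  using measurable_compose[OF assms(2) nc_measurable[OF assms(1)]] by (simp add: comp_def)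

lemma nc_abs: "normal_contraction C \<Longrightarrow> \<bar>C x\<bar> \<le> \<bar>x\<bar>"
  unfolding normal_contraction_def by (metis diff_zero)

lemma nc_lip: "normal_contraction C \<Longrightarrow> \<bar>C x - C y\<bar> \<le> \<bar>x - y\<bar>"
  unfolding normal_contraction_def by blast

lemma ennreal_le_Inf_add:
  fixes c :: ennreal
  assumes "\<And>x y. x \<in> A \<Longrightarrow> y \<in> B \<Longrightarrow> c \<le> x + y"
  shows "c \<le> Inf A + Inf B"
proof (rule ennreal_le_epsilon)
  fix e :: real assume fin: "Inf A + Inf B < top" and e: "0 < e"
  have fa: "Inf A \<noteq> \<infinity>"
  proof
    assume a: "Inf A = \<infinity>"
    have "Inf A + Inf B = \<infinity> + Inf B" using a by (rule arg_cong)
    also have "\<infinity> + Inf B = (\<infinity>::ennreal)" by simp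
    finally have "Inf A + Inf B = \<infinity>" .
    then show False using fin by (metis less_irrefl infinity_ennreal_def)
  qed
  have fb: "Inf B \<noteq> \<infinity>"
  proof
    assume a: "Inf B = \<infinity>"
    have "Inf A + Inf B = Inf A + \<infinity>" using a by (rule arg_cong)
    also have "Inf A + \<infinity> = (\<infinity>::ennreal)" by simp
    finally have "Inf A + Inf B = \<infinity>" .
    then show False using fin by (metis less_irrefl infinity_ennreal_def)
  qed
  have e2: "0 < e/2" using e by simp
  have lt: "z < z + ennreal (e/2)" if "z \<noteq> \<infinity>" for z :: ennreal
    using ennreal_add_left_cancel_less[of z 0 "ennreal (e/2)"] that e2 by simp
  obtain x where x: "x \<in> A" "x < Inf A + ennreal (e/2)"
    using lt[OF fa] by (auto simp: Inf_less_iff)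
  obtain y where y: "y \<in> B" "y < Inf B + ennreal (e/2)"
    using lt[OF fb] by (auto simp: Inf_less_iff)
  have "c \<le> x + y" using assms x y by auto
  also have "\<dots> \<le> (Inf A + ennreal (e/2)) + (Inf B + ennreal (e/2))"
    using x y by (intro add_mono) auto
  also have "\<dots> = Inf A + Inf B + (ennreal (e/2) + ennreal (e/2))" by (simp add: ac_simps)
  also have "ennreal (e/2) + ennreal (e/2) = ennreal e"
    using e by (simp flip: ennreal_plus)
  finally show "c \<le> Inf A + Inf B + ennreal e" .
qed

lemma operates_core:
  assumes Lf: "L2_functional M E" and C: "normal_contraction C" and op: "operates (L2 M) C E"
    and f: "f \<in> L0 M" and g: "g \<in> L0 M"
    and us: "\<And>n. us n \<in> L0 M" "loc_meas_conv M us (\<lambda>x. f x + g x)"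
    and vs: "\<And>n. vs n \<in> L0 M" "loc_meas_conv M vs (\<lambda>x. f x - g x)"
    and ua: "(\<lambda>n. ext_inf M E (us n)) \<longlonglongrightarrow> a"
    and vb: "(\<lambda>n. ext_inf M E (vs n)) \<longlonglongrightarrow> b"
  shows "Ee M E (\<lambda>x. f x + C (g x)) + Ee M E (\<lambda>x. f x - C (g x)) \<le> a + b"
proof -
  define p where "p n = (\<lambda>x. (us n x + vs n x)/2 + C ((us n x - vs n x)/2))" for n
  define q where "q n = (\<lambda>x. (us n x + vs n x)/2 - C ((us n x - vs n x)/2))" for n
  have mu: "us n \<in> borel_measurable M" and mv: "vs n \<in> borel_measurable M" for n
    using us vs by (auto simp: L0_def)
  have mf: "f \<in> borel_measurable M" and mg: "g \<in> borel_measurable M" using f g by (auto simp: L0_def)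
  have mCg: "(\<lambda>x. C (g x)) \<in> borel_measurable M" by (rule nc_comp_meas[OF C mg])
  have mCd: "(\<lambda>x. C ((us n x - vs n x)/2)) \<in> borel_measurable M" for n
    by (rule nc_comp_meas[OF C]) (use mu mv in measurable)
  have mp: "p n \<in> borel_measurable M" for n unfolding p_def using mu mv mCd by measurable
  have mq: "q n \<in> borel_measurable M" for n unfolding q_def using mu mv mCd by measurable
  have k1: "(\<lambda>x. f x + C (g x)) \<in> L0 M" and k2: "(\<lambda>x. f x - C (g x)) \<in> L0 M"
    using mf mCg by (auto simp: L0_def)
  have cp: "loc_meas_conv M p (\<lambda>x. f x + C (g x))"
  proof (rule loc_meas_conv_bound[OF mu _ mv _ mp _ us(2) vs(2)])
    fix n x
    define a where "a = us n x - (f x + g x)"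
    define b where "b = vs n x - (f x - g x)"
    define D where "D = C ((us n x - vs n x)/2) - C (g x)"
    have "\<bar>D\<bar> \<le> \<bar>(us n x - vs n x)/2 - g x\<bar>" unfolding D_def by (rule nc_lip[OF C])
    also have "(us n x - vs n x)/2 - g x = (a - b)/2" by (simp add: a_def b_def field_simps)
    finally have D1: "\<bar>D\<bar> \<le> \<bar>a - b\<bar>/2" by simp
    have "p n x - (f x + C (g x)) = (a + b)/2 + D"
      by (simp add: p_def a_def b_def D_def field_simps)
    then have "\<bar>p n x - (f x + C (g x))\<bar> \<le> \<bar>a + b\<bar>/2 + \<bar>D\<bar>"
      using abs_triangle_ineq[of "(a+b)/2" D] by simp
    moreover have "\<bar>a + b\<bar> \<le> \<bar>a\<bar> + \<bar>b\<bar>" by (rule abs_triangle_ineq)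
    moreover have "\<bar>a - b\<bar> \<le> \<bar>a\<bar> + \<bar>b\<bar>" by (rule abs_triangle_ineq4)
    ultimately show "\<bar>p n x - (f x + C (g x))\<bar> \<le> \<bar>us n x - (f x + g x)\<bar> + \<bar>vs n x - (f x - g x)\<bar>"
      using D1 unfolding a_def[symmetric] b_def[symmetric] by linarith
  qed (use mf mg mCg in \<open>auto intro!: borel_measurable_add borel_measurable_diff\<close>)
  have cq: "loc_meas_conv M q (\<lambda>x. f x - C (g x))"
  proof (rule loc_meas_conv_bound[OF mu _ mv _ mq _ us(2) vs(2)])
    fix n x
    define a where "a = us n x - (f x + g x)"
    define b where "b = vs n x - (f x - g x)"
    define D where "D = C ((us n x - vs n x)/2) - C (g x)"
    have "\<bar>D\<bar> \<le> \<bar>(us n x - vs n x)/2 - g x\<bar>" unfolding D_def by (rule nc_lip[OF C])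
    also have "(us n x - vs n x)/2 - g x = (a - b)/2" by (simp add: a_def b_def field_simps)
    finally have D1: "\<bar>D\<bar> \<le> \<bar>a - b\<bar>/2" by simp
    have "q n x - (f x - C (g x)) = (a + b)/2 - D"
      by (simp add: q_def a_def b_def D_def field_simps)
    then have "\<bar>q n x - (f x - C (g x))\<bar> \<le> \<bar>a + b\<bar>/2 + \<bar>D\<bar>"
      using abs_triangle_ineq4[of "(a+b)/2" D] by simp
    moreover have "\<bar>a + b\<bar> \<le> \<bar>a\<bar> + \<bar>b\<bar>" by (rule abs_triangle_ineq)
    moreover have "\<bar>a - b\<bar> \<le> \<bar>a\<bar> + \<bar>b\<bar>" by (rule abs_triangle_ineq4)
    ultimately show "\<bar>q n x - (f x - C (g x))\<bar> \<le> \<bar>us n x - (f x + g x)\<bar> + \<bar>vs n x - (f x - g x)\<bar>"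
      using D1 unfolding a_def[symmetric] b_def[symmetric] by linarith
  qed (use mf mg mCg in \<open>auto intro!: borel_measurable_add borel_measurable_diff\<close>)
  have pL0: "p n \<in> L0 M" and qL0: "q n \<in> L0 M" for n using mp mq by (auto simp: L0_def)
  have ext: "ext_inf M E (p n) + ext_inf M E (q n) \<le> ext_inf M E (us n) + ext_inf M E (vs n)" for n
  proof (cases "us n \<in> L2 M \<and> vs n \<in> L2 M")
    case True
    define F where "F = (\<lambda>x. (us n x + vs n x)/2)"
    define G where "G = (\<lambda>x. (us n x - vs n x)/2)"
    have bFG: "\<bar>F x\<bar> + \<bar>G x\<bar> \<le> \<bar>us n x\<bar> + \<bar>vs n x\<bar>" for x
      unfolding F_def G_def by (simp add: abs_if field_simps)
    have bC: "\<bar>C (G x)\<bar> \<le> \<bar>G x\<bar>" for x by (rule nc_abs[OF C])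
    have uL: "us n \<in> L2 M" and vL: "vs n \<in> L2 M" using True by auto
    have FL: "F \<in> L2 M"
      by (rule L2_bound[OF _ uL vL]) (use mu mv bFG in \<open>auto simp: F_def\<close>)
    have GL: "G \<in> L2 M"
      by (rule L2_bound[OF _ uL vL]) (use mu mv bFG in \<open>auto simp: G_def\<close>)
    have bp: "\<bar>p n x\<bar> \<le> \<bar>us n x\<bar> + \<bar>vs n x\<bar>" for x
    proof -
      have "p n x = F x + C (G x)" by (simp add: p_def F_def G_def)
      then show ?thesis using abs_triangle_ineq[of "F x" "C (G x)"] bC[of x] bFG[of x] by linarith
    qed
    have bq: "\<bar>q n x\<bar> \<le> \<bar>us n x\<bar> + \<bar>vs n x\<bar>" for x
    proof -
      have "q n x = F x - C (G x)" by (simp add: q_def F_def G_def)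
      then show ?thesis using abs_triangle_ineq4[of "F x" "C (G x)"] bC[of x] bFG[of x] by linarith
    qed
    have pL: "p n \<in> L2 M" by (rule L2_bound[OF mp uL vL bp])
    have qL: "q n \<in> L2 M" by (rule L2_bound[OF mq uL vL bq])
    have "E (\<lambda>x. F x + C (G x)) + E (\<lambda>x. F x - C (G x)) \<le> E (\<lambda>x. F x + G x) + E (\<lambda>x. F x - G x)"
      using op FL GL unfolding operates_def by blast
    moreover have "(\<lambda>x. F x + C (G x)) = p n" by (simp add: p_def F_def G_def)
    moreover have "(\<lambda>x. F x - C (G x)) = q n" by (simp add: q_def F_def G_def)
    moreover have "(\<lambda>x. F x + G x) = us n" by (simp add: F_def G_def field_simps)
    moreover have "(\<lambda>x. F x - G x) = vs n" by (simp add: F_def G_def field_simps)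
    ultimately show ?thesis using pL qL uL vL by (simp add: ext_inf_def)
  next
    case False
    then show ?thesis by (auto simp: ext_inf_def)
  qed
  obtain r where r: "strict_mono r" "((\<lambda>n. ext_inf M E (p n)) \<circ> r) \<longlonglongrightarrow> liminf (\<lambda>n. ext_inf M E (p n))"
    using liminf_subseq_lim by blast
  obtain s where s: "strict_mono s" "((\<lambda>n. ext_inf M E (q (r n))) \<circ> s) \<longlonglongrightarrow> liminf (\<lambda>n. ext_inf M E (q (r n)))"
    using liminf_subseq_lim by blast
  have E1: "Ee M E (\<lambda>x. f x + C (g x)) \<le> liminf (\<lambda>n. ext_inf M E (p n))"
    by (rule Ee_le_liminf[OF k1 pL0 cp])
  have "loc_meas_conv M (q \<circ> r) (\<lambda>x. f x - C (g x))" by (rule loc_meas_conv_subseq[OF r(1) cq])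
  then have E2: "Ee M E (\<lambda>x. f x - C (g x)) \<le> liminf (\<lambda>n. ext_inf M E (q (r n)))"
    using Ee_le_liminf[OF k2, of "q \<circ> r" E] qL0 by (simp add: comp_def)
  have rs: "strict_mono (r \<circ> s)" by (rule strict_mono_o[OF r(1) s(1)])
  have tp: "(\<lambda>n. ext_inf M E (p (r (s n)))) \<longlonglongrightarrow> liminf (\<lambda>n. ext_inf M E (p n))"
    using LIMSEQ_subseq_LIMSEQ[OF r(2) s(1)] by (simp add: comp_def)
  have tq: "(\<lambda>n. ext_inf M E (q (r (s n)))) \<longlonglongrightarrow> liminf (\<lambda>n. ext_inf M E (q (r n)))"
    using s(2) by (simp add: comp_def)
  have tu: "(\<lambda>n. ext_inf M E (us (r (s n)))) \<longlonglongrightarrow> a"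
    using LIMSEQ_subseq_LIMSEQ[OF ua rs] by (simp add: comp_def)
  have tv: "(\<lambda>n. ext_inf M E (vs (r (s n)))) \<longlonglongrightarrow> b"
    using LIMSEQ_subseq_LIMSEQ[OF vb rs] by (simp add: comp_def)
  have "liminf (\<lambda>n. ext_inf M E (p n)) + liminf (\<lambda>n. ext_inf M E (q (r n))) \<le> a + b"
    by (rule LIMSEQ_le[OF tendsto_add[OF tp tq] tendsto_add[OF tu tv]]) (use ext in auto)
  then show ?thesis using add_mono[OF E1 E2] by (rule order_trans[rotated])
qed

lemma operates_Ee:
  assumes Lf: "L2_functional M E" and C: "normal_contraction C" and op: "operates (L2 M) C E"
  shows "operates (L0 M) C (Ee M E)"
  unfolding operates_def
proof (intro ballI)
  fix f g assume f: "f \<in> L0 M" and g: "g \<in> L0 M"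
  have h1: "(\<lambda>x. f x + g x) \<in> L0 M" and h2: "(\<lambda>x. f x - g x) \<in> L0 M" using f g by (auto simp: L0_def)
  define S1 where "S1 = {liminf (\<lambda>n. ext_inf M E (fs n)) | fs. (\<forall>n. fs n \<in> L0 M) \<and> loc_meas_conv M fs (\<lambda>x. f x + g x)}"
  define S2 where "S2 = {liminf (\<lambda>n. ext_inf M E (fs n)) | fs. (\<forall>n. fs n \<in> L0 M) \<and> loc_meas_conv M fs (\<lambda>x. f x - g x)}"
  have "Ee M E (\<lambda>x. f x + C (g x)) + Ee M E (\<lambda>x. f x - C (g x)) \<le> Inf S1 + Inf S2"
  proof (rule ennreal_le_Inf_add)
    fix x y assume "x \<in> S1" "y \<in> S2"
    then obtain us vs where us: "\<forall>n. us n \<in> L0 M" "loc_meas_conv M us (\<lambda>x. f x + g x)" "x = liminf (\<lambda>n. ext_inf M E (us n))"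
      and vs: "\<forall>n. vs n \<in> L0 M" "loc_meas_conv M vs (\<lambda>x. f x - g x)" "y = liminf (\<lambda>n. ext_inf M E (vs n))"
      unfolding S1_def S2_def by blast
    obtain us' where us': "\<forall>n. us' n \<in> L0 M" "loc_meas_conv M us' (\<lambda>x. f x + g x)" "(\<lambda>n. ext_inf M E (us' n)) \<longlonglongrightarrow> x"
      using Ee_conv_rep[of us M "\<lambda>x. f x + g x" E] us by auto
    obtain vs' where vs': "\<forall>n. vs' n \<in> L0 M" "loc_meas_conv M vs' (\<lambda>x. f x - g x)" "(\<lambda>n. ext_inf M E (vs' n)) \<longlonglongrightarrow> y"
      using Ee_conv_rep[of vs M "\<lambda>x. f x - g x" E] vs by auto
    show "Ee M E (\<lambda>x. f x + C (g x)) + Ee M E (\<lambda>x. f x - C (g x)) \<le> x + y"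
      by (rule operates_core[OF Lf C op f g _ us'(2) _ vs'(2) us'(3) vs'(3)]) (use us' vs' in auto)
  qed
  also have "Inf S1 + Inf S2 = Ee M E (\<lambda>x. f x + g x) + Ee M E (\<lambda>x. f x - g x)"
    using h1 h2 by (simp add: Ee_def S1_def S2_def)
  finally show "Ee M E (\<lambda>x. f x + C (g x)) + Ee M E (\<lambda>x. f x - C (g x)) \<le> Ee M E (\<lambda>x. f x + g x) + Ee M E (\<lambda>x. f x - g x)" .
qed





lemma ennreal_double_le: "(a::ennreal) + a \<le> b + b \<Longrightarrow> a \<le> b"
proof -
  assume h: "a + a \<le> b + b"
  have "2 * a \<le> 2 * b" using h by (simp only: mult_2)
  moreover have "(2::ennreal) \<noteq> 0" "(2::ennreal) \<noteq> top" by simp_all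
  ultimately show "a \<le> b" using ennreal_mult_le_mult_iff by blast
qed

lemma Ee_contr:
  assumes Lf: "L2_functional M E" and op: "operates (L0 M) C (Ee M E)" and g: "g \<in> L0 M"
  shows "Ee M E (\<lambda>x. C (g x)) \<le> Ee M E g"
proof -
  have z: "(\<lambda>x. 0) \<in> L0 M" by (simp add: L0_def)
  have "Ee M E (\<lambda>x. C (g x)) + Ee M E (\<lambda>x. - C (g x)) \<le> Ee M E g + Ee M E (\<lambda>x. - g x)"
    using op[unfolded operates_def, rule_format, OF z g] by simp
  then have "Ee M E (\<lambda>x. C (g x)) + Ee M E (\<lambda>x. C (g x)) \<le> Ee M E g + Ee M E g"
    using Ee_neg[OF Lf, of "\<lambda>x. C (g x)"] Ee_neg[OF Lf, of g] by simp
  then show ?thesis by (rule ennreal_double_le)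
qed

lemma M_set_nonempty:
  assumes "f \<in> M_set S F"
  shows "\<exists>r>0. F (\<lambda>x. f x / r) \<le> 1"
proof -
  have "((\<lambda>t. F (\<lambda>x. t * f x)) \<longlongrightarrow> 0) (at_right 0)" using assms by (simp add: M_set_def)
  then have "eventually (\<lambda>t. F (\<lambda>x. t * f x) < 1) (at_right (0::real))"
    by (rule order_tendstoD(2)) simp
  then obtain b where b: "b > 0" "\<And>y. y > 0 \<Longrightarrow> y < b \<Longrightarrow> F (\<lambda>x. y * f x) < 1"
    unfolding eventually_at_right_field by auto
  have "F (\<lambda>x. (b/2) * f x) < 1" using b by (intro b(2)) auto
  moreover have "(\<lambda>x. f x / (2/b)) = (\<lambda>x. (b/2) * f x)" by (simp add: field_simps)
  ultimately show ?thesis using b(1) by (intro exI[of _ "2/b"]) auto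
qed

lemma lux_mono:
  assumes f: "f \<in> M_set S F"
    and le: "\<And>r. r > 0 \<Longrightarrow> F (\<lambda>x. f x / r) \<le> 1 \<Longrightarrow> F (\<lambda>x. h x / r) \<le> 1"
  shows "lux F h \<le> lux F f"
  unfolding lux_def
proof (rule cInf_superset_mono)
  show "{r. 0 < r \<and> F (\<lambda>x. f x / r) \<le> 1} \<noteq> {}" using M_set_nonempty[OF f] by auto
  show "bdd_below {r. 0 < r \<and> F (\<lambda>x. h x / r) \<le> 1}" by (rule bdd_belowI[of _ 0]) auto
  show "{r. 0 < r \<and> F (\<lambda>x. f x / r) \<le> 1} \<subseteq> {r. 0 < r \<and> F (\<lambda>x. h x / r) \<le> 1}" using le by auto
qed

lemma lux_abs:
  assumes Lf: "L2_functional M E" and op: "operates (L0 M) abs (Ee M E)"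
    and f: "f \<in> M_set (L0 M) (Ee M E)"
  shows "lux (Ee M E) (\<lambda>x. \<bar>f x\<bar>) \<le> lux (Ee M E) f"
proof (rule lux_mono[OF f])
  fix r :: real assume r: "r > 0" and le: "Ee M E (\<lambda>x. f x / r) \<le> 1"
  have "(\<lambda>x. f x / r) \<in> L0 M" using f by (auto simp: M_set_def L0_def)
  from Ee_contr[OF Lf op this] have "Ee M E (\<lambda>x. \<bar>f x / r\<bar>) \<le> Ee M E (\<lambda>x. f x / r)" .
  moreover have "(\<lambda>x. \<bar>f x / r\<bar>) = (\<lambda>x. \<bar>f x\<bar> / r)" using r by (simp add: abs_divide)
  ultimately show "Ee M E (\<lambda>x. \<bar>f x\<bar> / r) \<le> 1" using le by simp
qed

lemma nc_scale:
  assumes C: "normal_contraction C" and r: "r > 0"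
  shows "normal_contraction (\<lambda>y. C (r * y) / r)"
  unfolding normal_contraction_def
proof (intro conjI allI)
  show "C (r * 0) / r = 0" using C by (simp add: normal_contraction_def)
  fix x y
  have "\<bar>C (r * x) - C (r * y)\<bar> \<le> \<bar>r * x - r * y\<bar>" by (rule nc_lip[OF C])
  also have "\<dots> = r * \<bar>x - y\<bar>" using r by (simp add: abs_mult right_diff_distrib[symmetric])
  finally have "\<bar>C (r * x) - C (r * y)\<bar> / r \<le> \<bar>x - y\<bar>" using r by (simp add: divide_le_eq mult.commute)
  then show "\<bar>C (r * x) / r - C (r * y) / r\<bar> \<le> \<bar>x - y\<bar>"
    using r by (simp add: diff_divide_distrib[symmetric] abs_divide)
qed

lemma lux_C:
  assumes Lf: "L2_functional M E" and op: "\<And>C. normal_contraction C \<Longrightarrow> operates (L0 M) C (Ee M E)"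
    and f: "f \<in> M_set (L0 M) (Ee M E)" and C: "normal_contraction C"
  shows "lux (Ee M E) (\<lambda>x. C (f x)) \<le> lux (Ee M E) f"
proof (rule lux_mono[OF f])
  fix r :: real assume r: "r > 0" and le: "Ee M E (\<lambda>x. f x / r) \<le> 1"
  have "(\<lambda>x. f x / r) \<in> L0 M" using f by (auto simp: M_set_def L0_def)
  from Ee_contr[OF Lf op[OF nc_scale[OF C r]] this]
  have "Ee M E (\<lambda>x. C (r * (f x / r)) / r) \<le> Ee M E (\<lambda>x. f x / r)" .
  moreover have "(\<lambda>x. C (r * (f x / r)) / r) = (\<lambda>x. C (f x) / r)" using r by simp
  ultimately show "Ee M E (\<lambda>x. C (f x) / r) \<le> 1" using le by simp
qed

lemma nc_abs_is: "normal_contraction abs"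
  unfolding normal_contraction_def by (simp add: abs_triangle_ineq3)



definition med3 :: "real \<Rightarrow> real \<Rightarrow> real \<Rightarrow> real" where
  "med3 x y z = max (min x y) (min (max x y) z)"

lemma med3_bound:
  "\<bar>med3 x y z - c\<bar> \<le> min \<bar>x - c\<bar> \<bar>y - c\<bar> + min \<bar>x - c\<bar> \<bar>z - c\<bar> + min \<bar>y - c\<bar> \<bar>z - c\<bar>"
proof -
  have "min \<bar>x - c\<bar> \<bar>y - c\<bar> \<ge> 0" "min \<bar>x - c\<bar> \<bar>z - c\<bar> \<ge> 0" "min \<bar>y - c\<bar> \<bar>z - c\<bar> \<ge> 0" by auto
  show ?thesis
  proof (cases "x \<le> y")
    case xy: True
    show ?thesis
    proof (cases "z \<le> x")
      case True then have "med3 x y z = x" using xy by (simp add: med3_def)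
      then show ?thesis using True xy by (simp add: min_def abs_if)
    next
      case False note zx = this
      show ?thesis
      proof (cases "z \<le> y")
        case True then have "med3 x y z = z" using xy zx by (simp add: med3_def)
        then show ?thesis using True xy zx by (simp add: min_def abs_if)
      next
        case False then have "med3 x y z = y" using xy zx by (simp add: med3_def)
        then show ?thesis using False xy zx by (simp add: min_def abs_if)
      qed
    qed
  next
    case yx: False
    show ?thesis
    proof (cases "z \<le> y")
      case True then have "med3 x y z = y" using yx by (simp add: med3_def)
      then show ?thesis using True yx by (simp add: min_def abs_if)
    next
      case False note zy = this
      show ?thesis
      proof (cases "z \<le> x")
        case True then have "med3 x y z = z" using yx zy by (simp add: med3_def)
        then show ?thesis using True yx zy by (simp add: min_def abs_if)
      next
        case False then have "med3 x y z = x" using yx zy by (simp add: med3_def)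
        then show ?thesis using False yx zy by (simp add: min_def abs_if)
      qed
    qed
  qed
qed

lemma med3_abs: "\<bar>med3 x y z\<bar> \<le> \<bar>x\<bar> + \<bar>y\<bar> + \<bar>z\<bar>"
  unfolding med3_def by (simp add: max_def min_def abs_if)

lemma max_form: "(a + b)/2 + \<bar>(a - b)/2\<bar> = max a (b::real)"
  by (simp add: max_def abs_if field_simps)

lemma min_form: "(a + b)/2 - \<bar>(a - b)/2\<bar> = min a (b::real)"
  by (simp add: min_def abs_if field_simps)

lemma lattice_E:
  assumes Lf: "L2_functional M E" and fbd: "first_BD (L2 M) E" and u: "u \<in> L2 M" and v: "v \<in> L2 M"
  shows "(\<lambda>x. max (u x) (v x)) \<in> L2 M" "(\<lambda>x. min (u x) (v x)) \<in> L2 M"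
    "E (\<lambda>x. max (u x) (v x)) + E (\<lambda>x. min (u x) (v x)) \<le> E u + E v"
proof -
  have mu: "u \<in> borel_measurable M" and mv: "v \<in> borel_measurable M" using u v by (auto simp: L2_def)
  show mx: "(\<lambda>x. max (u x) (v x)) \<in> L2 M"
    by (rule L2_bound[OF _ u v]) (use mu mv in auto)
  show mn: "(\<lambda>x. min (u x) (v x)) \<in> L2 M"
    by (rule L2_bound[OF _ u v]) (use mu mv in auto)
  define F where "F = (\<lambda>x. (u x + v x)/2)"
  define G where "G = (\<lambda>x. (u x - v x)/2)"
  have FL: "F \<in> L2 M" by (rule L2_bound[OF _ u v]) (use mu mv in \<open>auto simp: F_def\<close>)
  have GL: "G \<in> L2 M" by (rule L2_bound[OF _ u v]) (use mu mv in \<open>auto simp: G_def\<close>)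
  have "E (\<lambda>x. F x + \<bar>G x\<bar>) + E (\<lambda>x. F x - \<bar>G x\<bar>) \<le> E (\<lambda>x. F x + G x) + E (\<lambda>x. F x - G x)"
    using fbd FL GL unfolding first_BD_def operates_def by blast
  moreover have "(\<lambda>x. F x + \<bar>G x\<bar>) = (\<lambda>x. max (u x) (v x))" unfolding F_def G_def by (simp only: max_form)
  moreover have "(\<lambda>x. F x - \<bar>G x\<bar>) = (\<lambda>x. min (u x) (v x))" unfolding F_def G_def by (simp only: min_form)
  moreover have "(\<lambda>x. F x + G x) = u" by (auto simp: F_def G_def field_simps)
  moreover have "(\<lambda>x. F x - G x) = v" by (auto simp: F_def G_def field_simps)
  ultimately show "E (\<lambda>x. max (u x) (v x)) + E (\<lambda>x. min (u x) (v x)) \<le> E u + E v" by simp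
qed

lemma lattice_E':
  assumes Lf: "L2_functional M E" and fbd: "first_BD (L2 M) E" and u: "u \<in> L2 M" and v: "v \<in> L2 M"
  shows "E (\<lambda>x. max (u x) (v x)) \<le> E u + E v" "E (\<lambda>x. min (u x) (v x)) \<le> E u + E v"
  using lattice_E(3)[OF assms] by (auto intro: order_trans[rotated] add_increasing add_increasing2)

lemma med3_E:
  assumes Lf: "L2_functional M E" and fbd: "first_BD (L2 M) E"
    and u: "u \<in> L2 M" and v: "v \<in> L2 M" and w: "w \<in> L2 M"
  shows "(\<lambda>x. med3 (u x) (v x) (w x)) \<in> L2 M"
    "E (\<lambda>x. med3 (u x) (v x) (w x)) \<le> 2 * E u + 2 * E v + E w"
proof -
  have a: "(\<lambda>x. min (u x) (v x)) \<in> L2 M" and b: "(\<lambda>x. max (u x) (v x)) \<in> L2 M"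
    using lattice_E[OF Lf fbd u v] by auto
  have c: "(\<lambda>x. min (max (u x) (v x)) (w x)) \<in> L2 M"
    using lattice_E[OF Lf fbd b w] by auto
  show "(\<lambda>x. med3 (u x) (v x) (w x)) \<in> L2 M"
    using lattice_E[OF Lf fbd a c] by (simp add: med3_def)
  have "E (\<lambda>x. med3 (u x) (v x) (w x)) \<le> E (\<lambda>x. min (u x) (v x)) + E (\<lambda>x. min (max (u x) (v x)) (w x))"
    using lattice_E'[OF Lf fbd a c] by (simp add: med3_def)
  also have "\<dots> \<le> (E u + E v) + (E (\<lambda>x. max (u x) (v x)) + E w)"
    by (intro add_mono lattice_E'[OF Lf fbd u v] lattice_E'[OF Lf fbd b w])
  also have "\<dots> \<le> (E u + E v) + ((E u + E v) + E w)"
    by (intro add_mono lattice_E'[OF Lf fbd u v] order_refl)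
  also have "\<dots> = 2 * E u + 2 * E v + E w" by (simp only: mult_2 add_ac)
  finally show "E (\<lambda>x. med3 (u x) (v x) (w x)) \<le> 2 * E u + 2 * E v + E w" .
qed



lemma min_sq_le: "(min \<bar>a\<bar> \<bar>b\<bar>)^2 \<le> (a::real)^2"
proof -
  have "(min \<bar>a\<bar> \<bar>b\<bar>)^2 \<le> \<bar>a\<bar>^2" by (intro power_mono) auto
  then show ?thesis by simp
qed

lemma min_sq_le2: "(min \<bar>a\<bar> \<bar>b\<bar>)^2 \<le> (b::real)^2"
  using min_sq_le[of b a] by (simp add: min.commute)

lemma psi_tendsto:
  fixes g :: "'a \<Rightarrow> real"
  assumes mg: "g \<in> borel_measurable M" and fin: "(\<integral>\<^sup>+x. ennreal ((g x)^2) \<partial>M) < \<infinity>"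
  shows "(\<lambda>k. \<integral>\<^sup>+x. ennreal (if \<bar>g x\<bar> \<le> 1 / real (Suc k) \<or> real (Suc k) < \<bar>g x\<bar> then (g x)^2 else 0) \<partial>M) \<longlonglongrightarrow> 0"
proof -
  have "(\<lambda>k. \<integral>\<^sup>+x. ennreal (if \<bar>g x\<bar> \<le> 1 / real (Suc k) \<or> real (Suc k) < \<bar>g x\<bar> then (g x)^2 else 0) \<partial>M) \<longlonglongrightarrow> (\<integral>\<^sup>+x. 0 \<partial>M)"
  proof (rule nn_integral_dominated_convergence[where w="\<lambda>x. ennreal ((g x)^2)"])
    show "\<And>i. (\<lambda>x. ennreal (if \<bar>g x\<bar> \<le> 1 / real (Suc i) \<or> real (Suc i) < \<bar>g x\<bar> then (g x)^2 else 0)) \<in> borel_measurable M"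
      using mg by measurable
    show "(\<lambda>x. 0::ennreal) \<in> borel_measurable M" by simp
    show "(\<lambda>x. ennreal ((g x)^2)) \<in> borel_measurable M" using mg by measurable
    show "\<And>j. AE x in M. ennreal (if \<bar>g x\<bar> \<le> 1 / real (Suc j) \<or> real (Suc j) < \<bar>g x\<bar> then (g x)^2 else 0) \<le> ennreal ((g x)^2)"
      by (intro AE_I2) (auto intro: ennreal_leI)
    show "integral\<^sup>N M (\<lambda>x. ennreal ((g x)^2)) < \<infinity>" using fin by simp
    show "AE x in M. (\<lambda>i. ennreal (if \<bar>g x\<bar> \<le> 1 / real (Suc i) \<or> real (Suc i) < \<bar>g x\<bar> then (g x)^2 else 0)) \<longlonglongrightarrow> 0"
    proof (intro AE_I2)
      fix x
      show "(\<lambda>i. ennreal (if \<bar>g x\<bar> \<le> 1 / real (Suc i) \<or> real (Suc i) < \<bar>g x\<bar> then (g x)^2 else 0)) \<longlonglongrightarrow> 0"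
      proof (cases "g x = 0")
        case True then show ?thesis by simp
      next
        case False
        define a where "a = \<bar>g x\<bar>"
        have a: "a > 0" using False by (simp add: a_def)
        obtain N :: nat where N: "max a (1/a) < real N" using reals_Archimedean2 by blast
        have "eventually (\<lambda>i. ennreal (if \<bar>g x\<bar> \<le> 1 / real (Suc i) \<or> real (Suc i) < \<bar>g x\<bar> then (g x)^2 else 0) = 0) sequentially"
          unfolding eventually_sequentially
        proof (intro exI allI impI)
          fix i assume i: "N \<le> i"
          have s: "real N < real (Suc i)" using i by simp
          have "a < real (Suc i)" using N s by linarith
          moreover have "1/a < real (Suc i)" using N s by linarith
          then have "1 / real (Suc i) < a" using a by (simp add: field_simps)
          ultimately show "ennreal (if \<bar>g x\<bar> \<le> 1 / real (Suc i) \<or> real (Suc i) < \<bar>g x\<bar> then (g x)^2 else 0) = 0"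
            unfolding a_def by auto
        qed
        then show ?thesis by (rule tendsto_eventually)
      qed
    qed
  qed
  then show ?thesis by simp
qed

lemma min_small:
  fixes g f :: "'a \<Rightarrow> real"
  assumes g: "g \<in> L2 M" and mfs: "\<And>n. fs n \<in> borel_measurable M" and mf: "f \<in> borel_measurable M"
    and c: "loc_meas_conv M fs f" and d: "0 < \<delta>"
  shows "eventually (\<lambda>n. (\<integral>\<^sup>+x. ennreal ((min \<bar>g x\<bar> \<bar>fs n x - f x\<bar>)^2) \<partial>M) < ennreal \<delta>) sequentially"
proof -
  have mg: "g \<in> borel_measurable M" and ig: "integrable M (\<lambda>x. (g x)^2)" using g by (auto simp: L2_def)
  have fin: "(\<integral>\<^sup>+x. ennreal ((g x)^2) \<partial>M) < \<infinity>"
    using ig by (simp add: integrable_iff_bounded)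
  define \<psi> where "\<psi> k x = (if \<bar>g x\<bar> \<le> 1 / real (Suc k) \<or> real (Suc k) < \<bar>g x\<bar> then (g x)^2 else 0)" for k x
  have "(\<lambda>k. \<integral>\<^sup>+x. ennreal (\<psi> k x) \<partial>M) \<longlonglongrightarrow> 0"
    unfolding \<psi>_def by (rule psi_tendsto[OF mg fin])
  moreover have d4: "0 < ennreal (\<delta>/4)" using d by simp
  ultimately have "eventually (\<lambda>k. (\<integral>\<^sup>+x. ennreal (\<psi> k x) \<partial>M) < ennreal (\<delta>/4)) sequentially"
    by (rule order_tendstoD(2))
  then obtain K where K: "(\<integral>\<^sup>+x. ennreal (\<psi> K x) \<partial>M) < ennreal (\<delta>/4)"
    unfolding eventually_sequentially by auto
  define \<eta> where "\<eta> = 1 / real (Suc K)"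
  define N where "N = real (Suc K)"
  have \<eta>: "\<eta> > 0" and N: "N > 0" by (simp_all add: \<eta>_def N_def)
  define A where "A = {x\<in>space M. \<eta> < \<bar>g x\<bar>}"
  have Asets: "A \<in> sets M" unfolding A_def using mg by measurable
  have "emeasure M A = (\<integral>\<^sup>+x. indicator A x \<partial>M)" using Asets by simp
  also have "\<dots> \<le> (\<integral>\<^sup>+x. ennreal ((g x)^2) * ennreal (1 / \<eta>^2) \<partial>M)"
  proof (rule nn_integral_mono)
    fix x assume "x \<in> space M"
    show "indicator A x \<le> ennreal ((g x)^2) * ennreal (1 / \<eta>^2)"
    proof (cases "x \<in> A")
      case True
      then have "\<eta> < \<bar>g x\<bar>" by (simp add: A_def)
      then have "\<eta>^2 < \<bar>g x\<bar>^2" using \<eta> by (intro power_strict_mono) auto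
      then have "1 \<le> (g x)^2 * (1 / \<eta>^2)" using \<eta> by (simp add: field_simps)
      then have "ennreal 1 \<le> ennreal ((g x)^2 * (1 / \<eta>^2))" by (rule ennreal_leI)
      then show ?thesis using True by (simp add: ennreal_mult[symmetric])
    qed simp
  qed
  also have "\<dots> = (\<integral>\<^sup>+x. ennreal ((g x)^2) \<partial>M) * ennreal (1 / \<eta>^2)"
    by (rule nn_integral_multc) (use mg in measurable)
  also have "\<dots> < \<infinity>" using fin by (simp add: ennreal_mult_less_top)
  finally have Afin: "emeasure M A < \<infinity>" .
  define m where "m = enn2real (emeasure M A)"
  have m: "emeasure M A = ennreal m" "m \<ge> 0" using Afin by (auto simp: m_def ennreal_enn2real_if)
  define \<epsilon> where "\<epsilon> = sqrt (\<delta> / (4 * (m + 1)))"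
  have \<epsilon>: "\<epsilon> > 0" using d m by (simp add: \<epsilon>_def)
  have \<epsilon>2: "\<epsilon>^2 = \<delta> / (4 * (m + 1))" using d m by (simp add: \<epsilon>_def)
  have \<epsilon>m: "\<epsilon>^2 * m \<le> \<delta>/4"
  proof -
    have "\<epsilon>^2 * m \<le> \<epsilon>^2 * (m + 1)" by (intro mult_left_mono) auto
    also have "\<dots> = \<delta>/4"
    proof -
      have "m + 1 > 0" using m by simp
      then show ?thesis unfolding \<epsilon>2 by (simp add: field_simps)
    qed
    finally show ?thesis .
  qed
  define S where "S n = A \<inter> {x\<in>space M. \<epsilon> < \<bar>fs n x - f x\<bar>}" for n
  have Ssets: "S n \<in> sets M" for n unfolding S_def using Asets mfs mf by measurable
  have "(\<lambda>n. emeasure M (S n)) \<longlonglongrightarrow> 0"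
    using c Asets Afin \<epsilon> unfolding loc_meas_conv_def S_def by blast
  moreover have "0 < ennreal (\<delta> / (4 * N^2))" using d N by simp
  ultimately have evS: "eventually (\<lambda>n. emeasure M (S n) < ennreal (\<delta> / (4 * N^2))) sequentially"
    by (rule order_tendstoD(2))
  show ?thesis
    using evS
  proof (rule eventually_mono)
    fix n assume Sn: "emeasure M (S n) < ennreal (\<delta> / (4 * N^2))"
    have pw: "(min \<bar>g x\<bar> \<bar>fs n x - f x\<bar>)^2 \<le> \<psi> K x + \<epsilon>^2 * indicator A x + N^2 * indicator (S n) x"
      if x: "x \<in> space M" for x
    proof -
      have p0: "0 \<le> \<psi> K x" by (simp add: \<psi>_def)
      have i0: "0 \<le> \<epsilon>^2 * indicator A x" "0 \<le> N^2 * indicator (S n) x" by auto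
      show ?thesis
      proof (cases "\<bar>g x\<bar> \<le> \<eta>")
        case True
        then have "\<psi> K x = (g x)^2" by (simp add: \<psi>_def \<eta>_def)
        then show ?thesis using min_sq_le[of "g x" "fs n x - f x"] i0 by linarith
      next
        case False
        then have xA: "x \<in> A" using x by (simp add: A_def)
        show ?thesis
        proof (cases "\<bar>fs n x - f x\<bar> \<le> \<epsilon>")
          case True
          have "(min \<bar>g x\<bar> \<bar>fs n x - f x\<bar>)^2 \<le> (fs n x - f x)^2" by (rule min_sq_le2)
          also have "\<dots> = \<bar>fs n x - f x\<bar>^2" by simp
          also have "\<dots> \<le> \<epsilon>^2" using True by (intro power_mono) auto
          moreover have "\<epsilon>^2 * indicator A x = \<epsilon>^2" using xA by simp
          ultimately show ?thesis using p0 i0 by linarith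
        next
          case False
          then have xS: "x \<in> S n" using xA x by (simp add: S_def)
          show ?thesis
          proof (cases "\<bar>g x\<bar> \<le> N")
            case True
            have "(min \<bar>g x\<bar> \<bar>fs n x - f x\<bar>)^2 \<le> (g x)^2" by (rule min_sq_le)
            also have "\<dots> = \<bar>g x\<bar>^2" by simp
            also have "\<dots> \<le> N^2" using True by (intro power_mono) auto
            moreover have "N^2 * indicator (S n) x = N^2" using xS by simp
            ultimately show ?thesis using p0 i0 by linarith
          next
            case False
            then have "\<psi> K x = (g x)^2" by (simp add: \<psi>_def N_def)
            then show ?thesis using min_sq_le[of "g x" "fs n x - f x"] i0 by linarith
          qed
        qed
      qed
    qed
    have "(\<integral>\<^sup>+x. ennreal ((min \<bar>g x\<bar> \<bar>fs n x - f x\<bar>)^2) \<partial>M)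
        \<le> (\<integral>\<^sup>+x. (ennreal (\<psi> K x) + ennreal (\<epsilon>^2) * indicator A x) + ennreal (N^2) * indicator (S n) x \<partial>M)"
    proof (rule nn_integral_mono)
      fix x assume x: "x \<in> space M"
      have "ennreal ((min \<bar>g x\<bar> \<bar>fs n x - f x\<bar>)^2) \<le> ennreal (\<psi> K x + \<epsilon>^2 * indicator A x + N^2 * indicator (S n) x)"
        by (rule ennreal_leI[OF pw[OF x]])
      also have "\<dots> = (ennreal (\<psi> K x) + ennreal (\<epsilon>^2) * indicator A x) + ennreal (N^2) * indicator (S n) x"
        by (simp add: \<psi>_def ennreal_plus ennreal_mult ennreal_indicator split: split_indicator)
      finally show "ennreal ((min \<bar>g x\<bar> \<bar>fs n x - f x\<bar>)^2) \<le> (ennreal (\<psi> K x) + ennreal (\<epsilon>^2) * indicator A x) + ennreal (N^2) * indicator (S n) x" .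
    qed
    also have "\<dots> = (\<integral>\<^sup>+x. ennreal (\<psi> K x) \<partial>M) + ennreal (\<epsilon>^2) * emeasure M A + ennreal (N^2) * emeasure M (S n)"
    proof -
      have mpsi: "(\<lambda>x. ennreal (\<psi> K x)) \<in> borel_measurable M" unfolding \<psi>_def using mg by measurable
      have "(\<integral>\<^sup>+x. (ennreal (\<psi> K x) + ennreal (\<epsilon>^2) * indicator A x) + ennreal (N^2) * indicator (S n) x \<partial>M)
          = (\<integral>\<^sup>+x. ennreal (\<psi> K x) + ennreal (\<epsilon>^2) * indicator A x \<partial>M) + (\<integral>\<^sup>+x. ennreal (N^2) * indicator (S n) x \<partial>M)"
        by (rule nn_integral_add) (use mpsi Asets Ssets in auto)
      also have "(\<integral>\<^sup>+x. ennreal (\<psi> K x) + ennreal (\<epsilon>^2) * indicator A x \<partial>M)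
          = (\<integral>\<^sup>+x. ennreal (\<psi> K x) \<partial>M) + (\<integral>\<^sup>+x. ennreal (\<epsilon>^2) * indicator A x \<partial>M)"
        by (rule nn_integral_add) (use mpsi Asets in auto)
      finally show ?thesis using Asets Ssets by (simp add: nn_integral_cmult_indicator)
    qed
    also have "\<dots> \<le> ennreal (\<delta>/4) + ennreal (\<delta>/4) + ennreal (\<delta>/4)"
    proof (intro add_mono)
      show "(\<integral>\<^sup>+x. ennreal (\<psi> K x) \<partial>M) \<le> ennreal (\<delta>/4)" using K by simp
      show "ennreal (\<epsilon>^2) * emeasure M A \<le> ennreal (\<delta>/4)"
        using \<epsilon>m m by (simp add: ennreal_mult[symmetric] ennreal_leI)
      have "ennreal (N^2) * emeasure M (S n) \<le> ennreal (N^2) * ennreal (\<delta> / (4 * N^2))"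
        using Sn by (intro mult_left_mono) auto
      also have "\<dots> = ennreal (\<delta>/4)" using N d by (simp add: ennreal_mult[symmetric])
      finally show "ennreal (N^2) * emeasure M (S n) \<le> ennreal (\<delta>/4)" .
    qed
    also have "\<dots> = ennreal (3 * \<delta> / 4)" using d by (simp add: ennreal_plus[symmetric])
    also have "\<dots> < ennreal \<delta>" using d by (simp add: ennreal_less_iff)
    finally show "(\<integral>\<^sup>+x. ennreal ((min \<bar>g x\<bar> \<bar>fs n x - f x\<bar>)^2) \<partial>M) < ennreal \<delta>" .
  qed
qed



lemma sq3: "((p::real) + q + r)^2 \<le> 3 * (p^2 + q^2 + r^2)"
proof -
  have "0 \<le> (p - q)^2 + (p - r)^2 + (q - r)^2" by simp
  then show ?thesis by (simp add: power2_eq_square algebra_simps)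
qed

lemma D_part:
  assumes Lf: "L2_functional M E" and fbd: "first_BD (L2 M) E" and f: "f \<in> L2 M"
    and fin: "Ee M E f < \<infinity>"
  shows "E f < \<infinity>"
proof -
  have fL0: "f \<in> L0 M" and mf: "f \<in> borel_measurable M" using f by (auto simp: L2_def L0_def)
  obtain fs where fs: "\<forall>n. fs n \<in> L0 M" "loc_meas_conv M fs f"
    and lfin: "liminf (\<lambda>n. ext_inf M E (fs n)) < \<infinity>"
    using fin fL0 unfolding Ee_def by (auto simp: Inf_less_iff)
  have mfs: "\<And>n. fs n \<in> borel_measurable M" using fs by (auto simp: L0_def)
  define l where "l = liminf (\<lambda>n. ext_inf M E (fs n))"
  define B where "B = l + 1"
  have lB: "l < B" using ennreal_add_left_cancel_less[of l 0 1] lfin by (simp add: B_def l_def)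
  have Bfin: "B < \<infinity>" using lfin by (simp add: B_def l_def)
  have freq: "\<exists>n>k. ext_inf M E (fs n) < B" for k
  proof (rule ccontr)
    assume "\<not> (\<exists>n>k. ext_inf M E (fs n) < B)"
    then have "eventually (\<lambda>n. B \<le> ext_inf M E (fs n)) sequentially"
      unfolding eventually_sequentially by (intro exI[of _ "Suc k"]) (use Suc_le_eq in \<open>force simp: not_less\<close>)
    then have "B \<le> l" unfolding l_def by (rule Liminf_bounded)
    then show False using lB by simp
  qed
  have good: "fs n \<in> L2 M \<and> E (fs n) < B" if "ext_inf M E (fs n) < B" for n
    using that Bfin by (auto simp: ext_inf_def split: if_splits)
  obtain a where a: "fs a \<in> L2 M" "E (fs a) < B" using freq[of 0] good by blast
  have diffL2: "(\<lambda>x. u x - f x) \<in> L2 M" if "u \<in> L2 M" for u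
    by (rule L2_bound[OF _ that f]) (use that mf in \<open>auto simp: L2_def\<close>)
  define P where "P k b c \<longleftrightarrow> fs b \<in> L2 M \<and> E (fs b) < B \<and> fs c \<in> L2 M \<and> E (fs c) < B \<and>
      (\<integral>\<^sup>+x. ennreal ((min \<bar>fs a x - f x\<bar> \<bar>fs b x - f x\<bar>)^2) \<partial>M) < ennreal (inverse (real (Suc k))) \<and>
      (\<integral>\<^sup>+x. ennreal ((min \<bar>fs a x - f x\<bar> \<bar>fs c x - f x\<bar>)^2) \<partial>M) < ennreal (inverse (real (Suc k))) \<and>
      (\<integral>\<^sup>+x. ennreal ((min \<bar>fs b x - f x\<bar> \<bar>fs c x - f x\<bar>)^2) \<partial>M) < ennreal (inverse (real (Suc k)))" for k b c
  have "\<exists>bc. P k (fst bc) (snd bc)" for k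
  proof -
    define \<delta> where "\<delta> = inverse (real (Suc k))"
    have d: "0 < \<delta>" by (simp add: \<delta>_def)
    have "eventually (\<lambda>n. (\<integral>\<^sup>+x. ennreal ((min \<bar>fs a x - f x\<bar> \<bar>fs n x - f x\<bar>)^2) \<partial>M) < ennreal \<delta>) sequentially"
      by (rule min_small[OF diffL2[OF a(1)] mfs mf fs(2) d])
    then obtain N where N: "\<And>n. n \<ge> N \<Longrightarrow> (\<integral>\<^sup>+x. ennreal ((min \<bar>fs a x - f x\<bar> \<bar>fs n x - f x\<bar>)^2) \<partial>M) < ennreal \<delta>"
      unfolding eventually_sequentially by auto
    obtain b where b: "b > N" "ext_inf M E (fs b) < B" using freq by blast
    have bL: "fs b \<in> L2 M" "E (fs b) < B" using good[OF b(2)] by auto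
    have "eventually (\<lambda>n. (\<integral>\<^sup>+x. ennreal ((min \<bar>fs a x - f x\<bar> \<bar>fs n x - f x\<bar>)^2) \<partial>M) < ennreal \<delta> \<and>
        (\<integral>\<^sup>+x. ennreal ((min \<bar>fs b x - f x\<bar> \<bar>fs n x - f x\<bar>)^2) \<partial>M) < ennreal \<delta>) sequentially"
      by (intro eventually_conj min_small[OF diffL2[OF a(1)] mfs mf fs(2) d] min_small[OF diffL2[OF bL(1)] mfs mf fs(2) d])
    then obtain N' where N': "\<And>n. n \<ge> N' \<Longrightarrow> (\<integral>\<^sup>+x. ennreal ((min \<bar>fs a x - f x\<bar> \<bar>fs n x - f x\<bar>)^2) \<partial>M) < ennreal \<delta> \<and>
        (\<integral>\<^sup>+x. ennreal ((min \<bar>fs b x - f x\<bar> \<bar>fs n x - f x\<bar>)^2) \<partial>M) < ennreal \<delta>"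
      unfolding eventually_sequentially by auto
    obtain c where c: "c > N'" "ext_inf M E (fs c) < B" using freq by blast
    have cL: "fs c \<in> L2 M" "E (fs c) < B" using good[OF c(2)] by auto
    have "P k b c" unfolding P_def using bL cL N[of b] N'[of c] b c by (auto simp: \<delta>_def)
    then show ?thesis by (intro exI[of _ "(b, c)"]) simp
  qed
  then obtain bc where bc: "\<And>k. P k (fst (bc k)) (snd (bc k))" by metis
  define w where "w k x = med3 (fs a x) (fs (fst (bc k)) x) (fs (snd (bc k)) x)" for k x
  have wL: "w k \<in> L2 M" and wE: "E (w k) \<le> 2 * E (fs a) + 2 * E (fs (fst (bc k))) + E (fs (snd (bc k)))" for k
    using med3_E[OF Lf fbd a(1), of "fs (fst (bc k))" "fs (snd (bc k))"] bc[of k]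
    unfolding w_def P_def by auto
  have wB: "E (w k) \<le> 2 * B + 2 * B + B" for k
  proof -
    have "E (w k) \<le> 2 * E (fs a) + 2 * E (fs (fst (bc k))) + E (fs (snd (bc k)))" by (rule wE)
    also have "\<dots> \<le> 2 * B + 2 * B + B"
      using a bc[of k] unfolding P_def by (intro add_mono mult_left_mono) auto
    finally show ?thesis .
  qed
  have wf: "(\<integral>\<^sup>+x. ennreal ((w k x - f x)^2) \<partial>M) \<le> ennreal (9 * inverse (real (Suc k)))" for k
  proof -
    define b where "b = fst (bc k)"
    define c where "c = snd (bc k)"
    define \<delta> where "\<delta> = inverse (real (Suc k))"
    have d: "0 < \<delta>" by (simp add: \<delta>_def)
    define m1 where "m1 x = min \<bar>fs a x - f x\<bar> \<bar>fs b x - f x\<bar>" for x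
    define m2 where "m2 x = min \<bar>fs a x - f x\<bar> \<bar>fs c x - f x\<bar>" for x
    define m3 where "m3 x = min \<bar>fs b x - f x\<bar> \<bar>fs c x - f x\<bar>" for x
    have I: "(\<integral>\<^sup>+x. ennreal ((m1 x)^2) \<partial>M) < ennreal \<delta>" "(\<integral>\<^sup>+x. ennreal ((m2 x)^2) \<partial>M) < ennreal \<delta>"
      "(\<integral>\<^sup>+x. ennreal ((m3 x)^2) \<partial>M) < ennreal \<delta>"
      using bc[of k] unfolding P_def m1_def m2_def m3_def b_def c_def \<delta>_def by auto
    have mm: "(\<lambda>x. ennreal (3 * (m1 x)^2)) \<in> borel_measurable M" "(\<lambda>x. ennreal (3 * (m2 x)^2)) \<in> borel_measurable M"
      "(\<lambda>x. ennreal (3 * (m3 x)^2)) \<in> borel_measurable M" "(\<lambda>x. ennreal ((m1 x)^2)) \<in> borel_measurable M"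
      "(\<lambda>x. ennreal ((m2 x)^2)) \<in> borel_measurable M" "(\<lambda>x. ennreal ((m3 x)^2)) \<in> borel_measurable M"
      unfolding m1_def m2_def m3_def using mfs mf by measurable
    have pw: "ennreal ((w k x - f x)^2) \<le> ennreal (3 * (m1 x)^2) + ennreal (3 * (m2 x)^2) + ennreal (3 * (m3 x)^2)" for x
    proof -
      have "\<bar>w k x - f x\<bar> \<le> m1 x + m2 x + m3 x"
        unfolding w_def m1_def m2_def m3_def b_def c_def by (rule med3_bound)
      then have "\<bar>w k x - f x\<bar>^2 \<le> (m1 x + m2 x + m3 x)^2" by (intro power_mono) auto
      also have "\<dots> \<le> 3 * ((m1 x)^2 + (m2 x)^2 + (m3 x)^2)" by (rule sq3)
      finally have "(w k x - f x)^2 \<le> 3 * (m1 x)^2 + 3 * (m2 x)^2 + 3 * (m3 x)^2" by simp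
      then have "ennreal ((w k x - f x)^2) \<le> ennreal (3 * (m1 x)^2 + 3 * (m2 x)^2 + 3 * (m3 x)^2)"
        by (rule ennreal_leI)
      then show ?thesis by (simp add: ennreal_plus)
    qed
    have "(\<integral>\<^sup>+x. ennreal ((w k x - f x)^2) \<partial>M)
        \<le> (\<integral>\<^sup>+x. ennreal (3 * (m1 x)^2) + ennreal (3 * (m2 x)^2) + ennreal (3 * (m3 x)^2) \<partial>M)"
      by (intro nn_integral_mono pw)
    also have "\<dots> = (\<integral>\<^sup>+x. ennreal (3 * (m1 x)^2) \<partial>M) + (\<integral>\<^sup>+x. ennreal (3 * (m2 x)^2) \<partial>M)
        + (\<integral>\<^sup>+x. ennreal (3 * (m3 x)^2) \<partial>M)"
      using mm by (simp add: nn_integral_add)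
    also have "\<dots> = 3 * (\<integral>\<^sup>+x. ennreal ((m1 x)^2) \<partial>M) + 3 * (\<integral>\<^sup>+x. ennreal ((m2 x)^2) \<partial>M)
        + 3 * (\<integral>\<^sup>+x. ennreal ((m3 x)^2) \<partial>M)"
      using mm by (simp add: ennreal_mult nn_integral_cmult)
    also have "\<dots> \<le> 3 * ennreal \<delta> + 3 * ennreal \<delta> + 3 * ennreal \<delta>"
      using I by (intro add_mono mult_left_mono) auto
    also have "\<dots> = ennreal (3 * \<delta>) + ennreal (3 * \<delta>) + ennreal (3 * \<delta>)"
    proof -
      have "ennreal (3 * \<delta>) = ennreal 3 * ennreal \<delta>" using d by (intro ennreal_mult) auto
      then have "ennreal (3 * \<delta>) = 3 * ennreal \<delta>" by simp
      then show ?thesis by simp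
    qed
    also have "\<dots> = ennreal (9 * \<delta>)" using d by (simp add: ennreal_plus[symmetric])
    finally show ?thesis by (simp add: \<delta>_def)
  qed
  have intb: "integral\<^sup>L M (\<lambda>x. (w k x - f x)^2) \<le> 9 * inverse (real (Suc k))" for k
  proof -
    have mw: "w k \<in> borel_measurable M" using wL[of k] by (simp add: L2_def)
    have "integral\<^sup>L M (\<lambda>x. (w k x - f x)^2) = enn2real (\<integral>\<^sup>+x. ennreal ((w k x - f x)^2) \<partial>M)"
      by (rule integral_eq_nn_integral) (use mw mf in auto)
    also have "\<dots> \<le> enn2real (ennreal (9 * inverse (real (Suc k))))"
      by (rule enn2real_mono[OF wf]) simp
    also have "\<dots> = 9 * inverse (real (Suc k))" by simp
    finally show ?thesis .
  qed
  have conv: "L2_conv M w f"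
    unfolding L2_conv_def
  proof (rule tendsto_sandwich[OF _ _ tendsto_const])
    show "\<forall>\<^sub>F k in sequentially. 0 \<le> integral\<^sup>L M (\<lambda>x. (w k x - f x)^2)" by simp
    show "\<forall>\<^sub>F k in sequentially. integral\<^sup>L M (\<lambda>x. (w k x - f x)^2) \<le> 9 * inverse (real (Suc k))"
      by (intro always_eventually allI intb)
    show "(\<lambda>k. 9 * inverse (real (Suc k))) \<longlonglongrightarrow> 0"
      using tendsto_mult[OF tendsto_const[of "9::real"] LIMSEQ_inverse_real_of_nat] by simp
  qed
  have lsc: "\<And>gs h. (\<forall>n. gs n \<in> L2 M) \<Longrightarrow> h \<in> L2 M \<Longrightarrow> L2_conv M gs h \<Longrightarrow> E h \<le> liminf (\<lambda>n. E (gs n))"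
    using Lf unfolding L2_functional_def by blast
  have "E f \<le> liminf (\<lambda>k. E (w k))" using lsc[of w f] wL f conv by blast
  also have "\<dots> \<le> liminf (\<lambda>k. 2 * B + 2 * B + B)"
    by (intro Liminf_mono always_eventually allI wB)
  also have "\<dots> = 2 * B + 2 * B + B" by (simp add: Liminf_const)
  also have "\<dots> < \<infinity>" using Bfin by (simp add: ennreal_mult_less_top)
  finally show ?thesis .
qed



lemma L2_scale:
  assumes "f \<in> L2 M" shows "(\<lambda>x. t * f x) \<in> L2 M"
proof -
  have m: "f \<in> borel_measurable M" and i: "integrable M (\<lambda>x. (f x)^2)" using assms by (auto simp: L2_def)
  have "(\<lambda>x. t * f x) \<in> borel_measurable M" using m by measurable
  moreover have "integrable M (\<lambda>x. t^2 * (f x)^2)" using i by simp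
  ultimately show ?thesis by (simp add: L2_def power_mult_distrib)
qed

lemma Ee_ge_E:
  assumes Lf: "L2_functional M E" and Eex: "Ee_exists M E" and h: "h \<in> L2 M" and hf: "E h < \<infinity>"
  shows "E h \<le> Ee M E h"
proof (rule Ee_ge)
  show hL0: "h \<in> L0 M" using h by (rule L2_L0)
  have mh: "h \<in> borel_measurable M" using h by (simp add: L2_def)
  fix fs assume fs: "\<forall>n. fs n \<in> L0 M" "loc_meas_conv M fs h"
  have mfs: "\<And>n. fs n \<in> borel_measurable M" using fs by (auto simp: L0_def)
  define gs where "gs n = (if fs n \<in> L2 M \<and> E (fs n) < \<infinity> then fs n else h)" for n
  have gd: "gs n \<in> dom_fun (L2 M) E" for n using h hf by (simp add: gs_def dom_fun_def)
  have hd: "h \<in> dom_fun (L2 M) E" using h hf by (simp add: dom_fun_def)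
  have mgs: "gs n \<in> borel_measurable M" for n using mfs mh by (simp add: gs_def)
  have cg: "loc_meas_conv M gs h"
    by (rule loc_meas_conv_bound[OF mfs mh mfs mh mgs mh fs(2) fs(2)]) (simp add: gs_def)
  have "E h \<le> liminf (\<lambda>n. E (gs n))" using Eex gd hd cg unfolding Ee_exists_def by blast
  also have "\<dots> \<le> liminf (\<lambda>n. ext_inf M E (fs n))"
  proof (intro Liminf_mono always_eventually allI)
    fix n show "E (gs n) \<le> ext_inf M E (fs n)"
      by (cases "fs n \<in> L2 M") (auto simp: gs_def ext_inf_def top_unique not_less)
  qed
  finally show "E h \<le> liminf (\<lambda>n. ext_inf M E (fs n))" .
qed

lemma Ee_eq_E:
  assumes Lf: "L2_functional M E" and fbd: "first_BD (L2 M) E" and Eex: "Ee_exists M E"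
    and h: "h \<in> L2 M" and fin: "Ee M E h < \<infinity> \<or> E h < \<infinity>"
  shows "Ee M E h = E h"
proof -
  have "E h < \<infinity>" using fin D_part[OF Lf fbd h] by auto
  then show ?thesis using Ee_le_E[OF h] Ee_ge_E[OF Lf Eex h] by (auto intro: antisym)
qed

theorem proposition3p10:
  fixes M :: "'a measure" and E :: "('a \<Rightarrow> real) \<Rightarrow> ennreal"
  assumes "sigma_finite_measure M"
    and "L2_functional M E"
    and "Ee_exists M E"
  shows "(order_preserving_form M E \<longrightarrow>
            dom_fun (L0 M) (Ee M E) \<inter> L2 M = dom_fun (L2 M) E \<and>
            M_set (L0 M) (Ee M E) \<inter> L2 M = M_set (L2 M) E)
       \<and> (order_preserving_form M E \<longrightarrow>
            first_BD (L0 M) (Ee M E) \<and>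
            (\<forall>f\<in>M_set (L0 M) (Ee M E). lux (Ee M E) (\<lambda>x. \<bar>f x\<bar>) \<le> lux (Ee M E) f))
       \<and> (dirichlet_form M E \<longrightarrow>
            second_BD (L0 M) (Ee M E) \<and>
            (\<forall>f\<in>M_set (L0 M) (Ee M E). \<forall>C. normal_contraction C \<longrightarrow>
               lux (Ee M E) (\<lambda>x. C (f x)) \<le> lux (Ee M E) f))"
proof (intro conjI impI)
  note Lf = assms(2) and Eex = assms(3)
  {
    assume opf: "order_preserving_form M E"
    then have fbd: "first_BD (L2 M) E" by (simp add: order_preserving_form_def)
    show "dom_fun (L0 M) (Ee M E) \<inter> L2 M = dom_fun (L2 M) E"
    proof (intro set_eqI iffI)
      fix h assume "h \<in> dom_fun (L0 M) (Ee M E) \<inter> L2 M"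
      then show "h \<in> dom_fun (L2 M) E" using D_part[OF Lf fbd] by (auto simp: dom_fun_def)
    next
      fix h assume "h \<in> dom_fun (L2 M) E"
      then show "h \<in> dom_fun (L0 M) (Ee M E) \<inter> L2 M"
        using Ee_le_E[of h M E] L2_L0[of h M] by (auto simp: dom_fun_def intro: le_less_trans)
    qed
    show "M_set (L0 M) (Ee M E) \<inter> L2 M = M_set (L2 M) E"
    proof (intro set_eqI iffI)
      fix h assume h: "h \<in> M_set (L0 M) (Ee M E) \<inter> L2 M"
      then have hL: "h \<in> L2 M" and t: "((\<lambda>t. Ee M E (\<lambda>x. t * h x)) \<longlongrightarrow> 0) (at_right 0)"
        by (auto simp: M_set_def)
      have "eventually (\<lambda>t. Ee M E (\<lambda>x. t * h x) < 1) (at_right (0::real))"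
        by (rule order_tendstoD(2)[OF t]) simp
      then have "eventually (\<lambda>t. Ee M E (\<lambda>x. t * h x) = E (\<lambda>x. t * h x)) (at_right (0::real))"
      proof (rule eventually_mono)
        fix t assume "Ee M E (\<lambda>x. t * h x) < 1"
        then have "Ee M E (\<lambda>x. t * h x) < \<infinity>" using less_trans[of _ 1 \<infinity>] by fastforce
        then show "Ee M E (\<lambda>x. t * h x) = E (\<lambda>x. t * h x)"
          using Ee_eq_E[OF Lf fbd Eex L2_scale[OF hL]] by blast
      qed
      then have "((\<lambda>t. E (\<lambda>x. t * h x)) \<longlongrightarrow> 0) (at_right 0)" using t tendsto_cong by fastforce
      then show "h \<in> M_set (L2 M) E" using hL by (simp add: M_set_def)
    next
      fix h assume h: "h \<in> M_set (L2 M) E"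
      then have hL: "h \<in> L2 M" and t: "((\<lambda>t. E (\<lambda>x. t * h x)) \<longlongrightarrow> 0) (at_right 0)"
        by (auto simp: M_set_def)
      have "eventually (\<lambda>t. E (\<lambda>x. t * h x) < 1) (at_right (0::real))"
        by (rule order_tendstoD(2)[OF t]) simp
      then have "eventually (\<lambda>t. Ee M E (\<lambda>x. t * h x) = E (\<lambda>x. t * h x)) (at_right (0::real))"
      proof (rule eventually_mono)
        fix t assume "E (\<lambda>x. t * h x) < 1"
        then have "E (\<lambda>x. t * h x) < \<infinity>" using less_trans[of _ 1 \<infinity>] by fastforce
        then show "Ee M E (\<lambda>x. t * h x) = E (\<lambda>x. t * h x)"
          using Ee_eq_E[OF Lf fbd Eex L2_scale[OF hL]] by blast
      qed
      then have "((\<lambda>t. Ee M E (\<lambda>x. t * h x)) \<longlongrightarrow> 0) (at_right 0)" using t tendsto_cong by fastforce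
      then show "h \<in> M_set (L0 M) (Ee M E) \<inter> L2 M" using hL L2_L0[OF hL] by (simp add: M_set_def)
    qed
  }
  {
    assume opf: "order_preserving_form M E"
    then have fbd: "first_BD (L2 M) E" by (simp add: order_preserving_form_def)
    have op: "operates (L0 M) abs (Ee M E)"
      by (rule operates_Ee[OF Lf nc_abs_is]) (use fbd in \<open>simp add: first_BD_def\<close>)
    then show "first_BD (L0 M) (Ee M E)" by (simp add: first_BD_def)
    show "\<forall>f\<in>M_set (L0 M) (Ee M E). lux (Ee M E) (\<lambda>x. \<bar>f x\<bar>) \<le> lux (Ee M E) f"
      using lux_abs[OF Lf op] by blast
  }
  {
    assume df: "dirichlet_form M E"
    then have sbd: "\<And>C. normal_contraction C \<Longrightarrow> operates (L2 M) C E"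
      by (simp add: dirichlet_form_def second_BD_def)
    have op: "\<And>C. normal_contraction C \<Longrightarrow> operates (L0 M) C (Ee M E)"
      by (rule operates_Ee[OF Lf _ sbd])
    then show "second_BD (L0 M) (Ee M E)" by (simp add: second_BD_def)
    show "\<forall>f\<in>M_set (L0 M) (Ee M E). \<forall>C. normal_contraction C \<longrightarrow> lux (Ee M E) (\<lambda>x. C (f x)) \<le> lux (Ee M E) f"
      using lux_C[OF Lf op] by blast
  }
qed


end
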